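(* For all $\nu\in\mathbb C$ and $x\in\mathbb C\setminus\{0\}$, the following identity holds as formal power series in $t$: $$\sum_{m=0}^\infty (xt)^m R_{m,\nu}(x;q)=\sum_{j=0}^\infty\frac{q^{j\nu}q^{j(j-1)/2}(-t)^j}{(t;q)_{j+1}\,(tx^2;q)_{j+1}}.$$
   Context: Fix $0<q<1$; $(a;q)_0=1$, $(a;q)_k=\prod_{i=0}^{k-1}(1-aq^i)$. The $q$-Lommel functions $R_{m,\nu}(x;q)$ are defined by $R_{-1,\nu}=0$, $R_{0,\nu}=1$ and $R_{m+1,\nu}(x;q)=\big(x+\frac{1-q^\nu}{x}\big)R_{m,\nu+1}(x;q)-R_{m-1,\nu+2}(x;q)$ for $m\ge0$. On the right-hand side each factor $1/(t;q)_{j+1}$, $1/(tx^2;q)_{j+1}$ is expanded as a power series in $t$. *)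

theory Defs
  imports "HOL-Analysis.Analysis" "HOL-Computational_Algebra.Formal_Power_Series"
begin

definition qpoch :: "'a::comm_ring_1 \<Rightarrow> 'a \<Rightarrow> nat \<Rightarrow> 'a" where
  "qpoch a q k = (\<Prod>i<k. 1 - a * q ^ i)"

text \<open>q-Lommel functions R_{m,nu}(x;q), with q^nu = exp(nu ln q) (q > 0 real).
  Recursion R_{-1}=0, R_0=1, R_{m+1,nu} = (x + (1-q^nu)/x) R_{m,nu+1} - R_{m-1,nu+2}.\<close>
fun qLommelR :: "real \<Rightarrow> nat \<Rightarrow> complex \<Rightarrow> complex \<Rightarrow> complex" where
  "qLommelR q 0 \<nu> x = 1"
| "qLommelR q (Suc 0) \<nu> x = x + (1 - complex_of_real q powr \<nu>) / x"
| "qLommelR q (Suc (Suc m)) \<nu> x =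
     (x + (1 - complex_of_real q powr \<nu>) / x) * qLommelR q (Suc m) (\<nu> + 1) x
     - qLommelR q m (\<nu> + 2) x"

end

theory Submission
  imports Defs
begin

definition EE :: "complex \<Rightarrow> complex \<Rightarrow> nat \<Rightarrow> complex fps" where
  "EE x c j = qpoch fps_X (fps_const c) j * qpoch (fps_const (x ^ 2) * fps_X) (fps_const c) j"

definition TT :: "complex \<Rightarrow> complex \<Rightarrow> complex \<Rightarrow> nat \<Rightarrow> complex fps" where
  "TT x c a j = fps_const (a ^ j * c ^ (j * (j - 1) div 2)) * (- fps_X) ^ j / EE x c (Suc j)"

definition UU :: "complex \<Rightarrow> complex \<Rightarrow> complex \<Rightarrow> nat \<Rightarrow> complex fps" where
  "UU x c a j = fps_const (a ^ j * c ^ (j * (j - 1) div 2)) * (- fps_X) ^ j / EE x c j"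

definition GG :: "complex \<Rightarrow> complex \<Rightarrow> complex \<Rightarrow> complex fps" where
  "GG x c a = Abs_fps (\<lambda>n. fps_nth (\<Sum>j<Suc n. TT x c a j) n)"

lemma qpoch_Suc: "qpoch a q (Suc j) = qpoch a q j * (1 - a * q ^ j)"
  by (simp add: qpoch_def)

lemma EE_Suc: "EE x c (Suc j) = EE x c j *
   ((1 - fps_X * fps_const c ^ j) * (1 - fps_const (x ^ 2) * fps_X * fps_const c ^ j))"
  by (simp add: EE_def qpoch_Suc algebra_simps)

lemma EE_0: "fps_nth (EE x c j) 0 = 1"
  by (induction j) (simp_all add: EE_Suc, simp add: EE_def qpoch_def)

lemma TT_alt: "TT x c a j = fps_X ^ j * (fps_const ((-1) ^ j * a ^ j * c ^ (j * (j - 1) div 2)) * inverse (EE x c (Suc j)))"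
proof -
  have m: "- fps_X = fps_const (-1::complex) * fps_X" by simp
  have p: "(- fps_X :: complex fps) ^ j = fps_const ((-1) ^ j) * fps_X ^ j"
    unfolding m by (simp only: power_mult_distrib fps_const_power)
  have d: "\<And>f. f / EE x c (Suc j) = f * inverse (EE x c (Suc j))" by (rule fps_divide_unit) (simp add: EE_0)
  show ?thesis unfolding TT_def d p
    by (simp only: fps_const_mult[symmetric] mult_ac)
qed

lemma UU_alt: "UU x c a j = fps_X ^ j * (fps_const ((-1) ^ j * a ^ j * c ^ (j * (j - 1) div 2)) * inverse (EE x c j))"
proof -
  have m: "- fps_X = fps_const (-1::complex) * fps_X" by simp
  have p: "(- fps_X :: complex fps) ^ j = fps_const ((-1) ^ j) * fps_X ^ j"
    unfolding m by (simp only: power_mult_distrib fps_const_power)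
  have d: "\<And>f. f / EE x c j = f * inverse (EE x c j)" by (rule fps_divide_unit) (simp add: EE_0)
  show ?thesis unfolding UU_def d p
    by (simp only: fps_const_mult[symmetric] mult_ac)
qed

lemma TT_nth: "n < j \<Longrightarrow> fps_nth (TT x c a j) n = 0"
  by (simp add: TT_alt fps_X_power_mult_nth)

lemma UU_nth: "n < j \<Longrightarrow> fps_nth (UU x c a j) n = 0"
  by (simp add: UU_alt fps_X_power_mult_nth)

lemma GG_sum: "n < N \<Longrightarrow> fps_nth (\<Sum>j<N. TT x c a j) n = fps_nth (GG x c a) n"
proof -
  assume "n < N"
  have "(\<Sum>j<N. fps_nth (TT x c a j) n) = (\<Sum>j<Suc n. fps_nth (TT x c a j) n)"
    using \<open>n < N\<close> by (intro sum.mono_neutral_right) (auto simp: TT_nth)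
  then show ?thesis by (simp add: GG_def fps_sum_nth)
qed



lemma alg_id:
  fixes X I Y A W K Z AJ :: "'a::comm_ring_1"
  shows "K*AJ*Z*I - (1+Y^2-A)*X*(K*(AJ*W)*Z*I) + Y^2*X^2*(K*(AJ*W^2)*Z*I)
     = K*AJ*Z*(I*((1-X*W)*(1-Y^2*X*W))) - K*W*(AJ*A)*(-X*Z)*I"
  by (simp add: algebra_simps power2_eq_square)

lemma tri: "Suc j * (Suc j - 1) div 2 = j * (j - 1) div 2 + j"
proof -
  have "Suc j * (Suc j - 1) = j * (j - 1) + 2 * j" by (cases j) (auto simp: algebra_simps)
  then show ?thesis by simp
qed

lemma step_id:
  "TT x c a j - fps_const (1 + x^2 - a) * fps_X * TT x c (a*c) j
     + fps_const (x^2) * fps_X^2 * TT x c (a*c^2) j = UU x c a j - UU x c a (Suc j)"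
proof -
  define I where "I = inverse (EE x c (Suc j))"
  define P where "P = (1 - fps_X * fps_const c ^ j) * (1 - fps_const (x ^ 2) * fps_X * fps_const c ^ j)"
  define K where "K = fps_const (c ^ (j * (j - 1) div 2))"
  define AJ where "AJ = fps_const a ^ j"
  define W where "W = fps_const c ^ j"
  define Z where "Z = (- fps_X :: complex fps) ^ j"
  define Y where "Y = fps_const x"
  define A where "A = fps_const a"
  have E1: "EE x c (Suc j) * I = 1" unfolding I_def by (rule inverse_mult_eq_1') (simp add: EE_0)
  have E2: "inverse (EE x c j) * EE x c j = 1" by (rule inverse_mult_eq_1) (simp add: EE_0)
  have invE: "inverse (EE x c j) = I * P"
  proof -
    have "inverse (EE x c j) = inverse (EE x c j) * (EE x c (Suc j) * I)" by (simp add: E1)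
    also have "\<dots> = (inverse (EE x c j) * EE x c j) * P * I" by (simp add: EE_Suc P_def mult_ac)
    also have "\<dots> = P * I" by (simp only: E2 mult_1_left)
    finally show ?thesis by (simp only: mult.commute)
  qed
  have d1: "\<And>f. f / EE x c (Suc j) = f * I" unfolding I_def by (rule fps_divide_unit) (simp add: EE_0)
  have d2: "\<And>f. f / EE x c j = f * inverse (EE x c j)" by (rule fps_divide_unit) (simp add: EE_0)
  have t1: "TT x c a j = K*AJ*Z*I"
    by (simp add: TT_def d1 K_def AJ_def Z_def mult_ac flip: fps_const_mult fps_const_power)
  have t2: "TT x c (a*c) j = K*(AJ*W)*Z*I"
    by (simp add: TT_def d1 K_def AJ_def W_def Z_def power_mult_distrib mult_ac flip: fps_const_mult fps_const_power)
  have t3: "TT x c (a*c^2) j = K*(AJ*W^2)*Z*I"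
    by (simp add: TT_def d1 K_def AJ_def W_def Z_def power_mult_distrib mult_ac flip: power_mult fps_const_mult fps_const_power)
  have u1: "UU x c a j = K*AJ*Z*(I*P)"
    by (simp add: UU_def d2 invE K_def AJ_def Z_def mult_ac flip: fps_const_mult fps_const_power)
  have u2: "UU x c a (Suc j) = K*W*(AJ*A)*(-fps_X*Z)*I"
    unfolding UU_def d1 tri
    by (simp add: K_def AJ_def W_def A_def Z_def power_add mult_ac flip: fps_const_mult fps_const_power)
  have c1: "fps_const (1 + x^2 - a) = 1 + Y^2 - A"
    by (simp add: Y_def A_def flip: fps_const_add fps_const_sub)
  have c2: "fps_const (x^2) = Y^2" by (simp add: Y_def fps_const_power)
  show ?thesis unfolding t1 t2 t3 u1 u2 c1 c2 P_def
    using alg_id[of K AJ Z I Y A fps_X W] by (simp add: Y_def W_def)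
qed


lemma UU_0: "UU x c a 0 = 1"
  by (simp add: UU_def EE_def qpoch_def)

lemma GG_rec:
  "fps_nth (GG x c a) n - (1 + x^2 - a) * (if n = 0 then 0 else fps_nth (GG x c (a*c)) (n-1))
    + x^2 * (if n < 2 then 0 else fps_nth (GG x c (a*c^2)) (n-2)) = (if n = 0 then 1 else 0)"
proof -
  define S1 where "S1 = (\<Sum>j<Suc n. TT x c a j)"
  define S2 where "S2 = (\<Sum>j<Suc n. TT x c (a*c) j)"
  define S3 where "S3 = (\<Sum>j<Suc n. TT x c (a*c^2) j)"
  define K2 where "K2 = fps_const (1 + x^2 - a)"
  define K3 where "K3 = fps_const (x^2)"
  have "(\<Sum>j<Suc n. TT x c a j - fps_const (1 + x^2 - a) * fps_X * TT x c (a*c) j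
     + fps_const (x^2) * fps_X^2 * TT x c (a*c^2) j) = (\<Sum>j<Suc n. UU x c a j - UU x c a (Suc j))"
    by (simp only: step_id)
  also have "\<dots> = 1 - UU x c a (Suc n)"
    by (simp only: sum_lessThan_telescope' UU_0)
  finally have eqS: "S1 - K2 * (fps_X * S2) + K3 * (fps_X^2 * S3) = 1 - UU x c a (Suc n)"
    unfolding S1_def S2_def S3_def K2_def K3_def
    by (simp only: sum.distrib sum_subtractf sum_distrib_left mult.assoc)
  have nl: "fps_nth (S1 - K2 * (fps_X * S2) + K3 * (fps_X^2 * S3)) n
     = fps_nth S1 n - (1 + x^2 - a) * (if n = 0 then 0 else fps_nth S2 (n-1))
       + x^2 * (if n < 2 then 0 else fps_nth S3 (n-2))"
    unfolding K2_def K3_def fps_add_nth fps_sub_nth fps_mult_left_const_nth fps_X_mult_nth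
      fps_X_power_mult_nth by simp
  have nr: "fps_nth (1 - UU x c a (Suc n)) n = (if n = 0 then 1 else 0)"
    using UU_nth[of n "Suc n" x c a] by simp
  have g1: "fps_nth S1 n = fps_nth (GG x c a) n" unfolding S1_def by (rule GG_sum) simp
  have g2: "fps_nth S2 (n-1) = fps_nth (GG x c (a*c)) (n-1)"
    unfolding S2_def by (rule GG_sum) simp
  have g3: "fps_nth S3 (n-2) = fps_nth (GG x c (a*c^2)) (n-2)"
    unfolding S3_def by (rule GG_sum) simp
  have "fps_nth S1 n - (1 + x^2 - a) * (if n = 0 then 0 else fps_nth S2 (n-1))
       + x^2 * (if n < 2 then 0 else fps_nth S3 (n-2)) = (if n = 0 then 1 else 0)"
    using eqS nl nr by metis
  then show ?thesis unfolding g1 g2 g3 .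
qed

lemma fin_alg:
  fixes x a R1 R2 :: complex
  assumes "(1 + x^2 - a) * x^Suc k = x^Suc (Suc k) * (x + (1 - a) / x)"
  shows "x^Suc (Suc k) * ((x + (1 - a) / x) * R1 - R2) = (1 + x^2 - a) * (x^Suc k * R1) - x^2 * (x^k * R2)"
proof -
  have "x^Suc (Suc k) * ((x + (1 - a) / x) * R1 - R2) = (x^Suc (Suc k) * (x + (1 - a) / x)) * R1 - x^Suc (Suc k) * R2"
    by (simp only: right_diff_distrib mult.assoc)
  also have "\<dots> = ((1 + x^2 - a) * x^Suc k) * R1 - x^2 * (x^k * R2)"
    by (simp only: assms) (simp add: power2_eq_square)
  finally show ?thesis by (simp only: mult.assoc)
qed

lemma GG_Lommel:
  fixes q :: real and x :: complex
  assumes q: "0 < q" and x: "x \<noteq> 0"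
  shows "\<forall>\<nu>. fps_nth (GG x (complex_of_real q) (complex_of_real q powr \<nu>)) n = x ^ n * qLommelR q n \<nu> x"
proof (induction n rule: less_induct)
  case (less n)
  define c where "c = complex_of_real q"
  have L: "fps_nth (GG x c (c powr \<nu>')) k = x ^ k * qLommelR q k \<nu>' x" if "k < n" for k \<nu>'
    using less that unfolding c_def by blast
  have c0: "c \<noteq> 0" using q by (simp add: c_def)
  have p1: "c powr (\<nu> + 1) = c powr \<nu> * c" for \<nu>
    using powr_nat'[of c 1] c0 by (simp add: powr_add)
  have p2: "c powr (\<nu> + 2) = c powr \<nu> * c^2" for \<nu>
    using powr_nat'[of c 2] c0 by (simp add: powr_add)
  show ?case
  proof
    fix \<nu>
    define a where "a = c powr \<nu>"
    have goal_eq: "fps_nth (GG x (complex_of_real q) (complex_of_real q powr \<nu>)) n = fps_nth (GG x c a) n"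
      by (simp add: c_def a_def)
    have Rq: "complex_of_real q powr \<nu> = a" by (simp add: c_def a_def)
    have "fps_nth (GG x c a) n = x ^ n * qLommelR q n \<nu> x"
    proof (cases n)
      case 0
      then show ?thesis using GG_rec[of x c a 0] by simp
    next
      case (Suc m)
      note n = Suc
      show ?thesis
      proof (cases m)
        case 0
        have "fps_nth (GG x c (c powr (\<nu>+1))) 0 = 1" using L[of 0 "\<nu>+1"] n by simp
        then have ih: "fps_nth (GG x c (a*c)) 0 = 1" by (simp only: p1 a_def)
        have "fps_nth (GG x c a) 1 = 1 + x^2 - a"
          using GG_rec[of x c a 1] ih by simp
        moreover have "x * (x + (1 - a) / x) = 1 + x^2 - a" using x by (simp add: field_simps power2_eq_square)
        ultimately show ?thesis using n 0 by (simp add: Rq)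
      next
        case (Suc k)
        have "fps_nth (GG x c (c powr (\<nu>+1))) (Suc k) = x ^ Suc k * qLommelR q (Suc k) (\<nu>+1) x"
          using L[of "Suc k" "\<nu>+1"] n Suc by simp
        then have ih1: "fps_nth (GG x c (a*c)) (Suc k) = x ^ Suc k * qLommelR q (Suc k) (\<nu>+1) x"
          by (simp only: p1 a_def)
        have "fps_nth (GG x c (c powr (\<nu>+2))) k = x ^ k * qLommelR q k (\<nu>+2) x"
          using L[of k "\<nu>+2"] n Suc by simp
        then have ih2: "fps_nth (GG x c (a*c^2)) k = x ^ k * qLommelR q k (\<nu>+2) x"
          by (simp only: p2 a_def)
        have r: "fps_nth (GG x c a) (Suc (Suc k)) - (1 + x^2 - a) * fps_nth (GG x c (a*c)) (Suc k)
              + x^2 * fps_nth (GG x c (a*c^2)) k = 0"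
          using GG_rec[of x c a "Suc (Suc k)"] by simp
        have gn: "fps_nth (GG x c a) (Suc (Suc k)) = (1 + x^2 - a) * (x ^ Suc k * qLommelR q (Suc k) (\<nu>+1) x)
              - x^2 * (x ^ k * qLommelR q k (\<nu>+2) x)"
          using r unfolding ih1 ih2 by (simp add: eq_diff_eq diff_add_eq diff_eq_eq)
        have e: "(1 + x^2 - a) * x ^ Suc k = x ^ Suc (Suc k) * (x + (1 - a) / x)"
          using x by (simp add: field_simps power2_eq_square)
        have R: "qLommelR q (Suc (Suc k)) \<nu> x = (x + (1 - a) / x) * qLommelR q (Suc k) (\<nu> + 1) x - qLommelR q k (\<nu> + 2) x"
          by (simp add: Rq)
        show ?thesis unfolding n Suc gn R by (rule fin_alg[OF e, symmetric])
      qed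
    qed
    then show "fps_nth (GG x (complex_of_real q) (complex_of_real q powr \<nu>)) n = x ^ n * qLommelR q n \<nu> x"
      by (simp only: goal_eq)
  qed
qed

theorem mainTheorem14:
  fixes q :: real and \<nu> x :: complex
  assumes "0 < q" and "q < 1" and "x \<noteq> 0"
  shows "(\<lambda>j. fps_const ((complex_of_real q powr \<nu>) ^ j * complex_of_real (q ^ (j * (j - 1) div 2)))
              * (- fps_X) ^ j
              / (qpoch fps_X (fps_const (complex_of_real q)) (Suc j)
                 * qpoch (fps_const (x ^ 2) * fps_X) (fps_const (complex_of_real q)) (Suc j)))
         sums Abs_fps (\<lambda>m. x ^ m * qLommelR q m \<nu> x)"
proof -
  define c where "c = complex_of_real q"
  define a where "a = c powr \<nu>"
  have eq: "(\<lambda>j. fps_const ((complex_of_real q powr \<nu>) ^ j * complex_of_real (q ^ (j * (j - 1) div 2)))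
              * (- fps_X) ^ j
              / (qpoch fps_X (fps_const (complex_of_real q)) (Suc j)
                 * qpoch (fps_const (x ^ 2) * fps_X) (fps_const (complex_of_real q)) (Suc j)))
        = TT x c a"
    by (rule ext) (simp add: TT_def EE_def c_def a_def)
  show ?thesis unfolding eq sums_def
  proof (rule tendsto_fpsI)
    fix n
    show "\<forall>\<^sub>F N in sequentially. fps_nth (\<Sum>j<N. TT x c a j) n = fps_nth (Abs_fps (\<lambda>m. x ^ m * qLommelR q m \<nu> x)) n"
      unfolding eventually_at_top_linorder
    proof (intro exI allI impI)
      fix N assume "Suc n \<le> N"
      then have "fps_nth (\<Sum>j<N. TT x c a j) n = fps_nth (GG x c a) n" by (intro GG_sum) simp
      also have "\<dots> = x ^ n * qLommelR q n \<nu> x"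
        using GG_Lommel[OF assms(1) assms(3), of n] by (simp add: c_def a_def)
      finally show "fps_nth (\<Sum>j<N. TT x c a j) n = fps_nth (Abs_fps (\<lambda>m. x ^ m * qLommelR q m \<nu> x)) n"
        by simp
    qed
  qed
qed

end
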